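(* Let $a\in\mathbb{R}^{n\times m}_+$ have no zero row and no zero column, $B\in\mathbb{R}^n_{>0}$, $\mathcal{P}=\{p\in\mathbb{R}^m_+:\sum_jp_j=\|B\|_1\}$, $\bar r_i=\|B\|_1\|a_i\|_\infty$, $\underline r_i=B_i\|a_i\|_\infty$. Define $\tilde h(r)=\sum_i\tilde h_i(r_i)$ where $\tilde h_i(r_i)=-B_i\log r_i$ for $r_i>\underline r_i$ and $\tilde h_i(r_i)=\frac{B_i}{2\underline r_i^2}(r_i-\underline r_i)^2-\frac{B_i}{\underline r_i}(r_i-\underline r_i)-B_i\log\underline r_i$ for $r_i\le\underline r_i$. Let $\mu=\min_i\frac{B_i}{\bar r_i^2}$, $L=\max_i\frac{B_i}{\underline r_i^2}$, $F(p)=\tilde h(ap)$, $F^*=\min_{p\in\mathcal{P}}F$. Then projected gradient $p^{t+1}=\Pi_{\mathcal{P}}(p^t-\frac{1}{L\|a\|^2}\nabla F(p^t))$ from $p^0\in\mathcal{P}$ satisfies $$F(p^t)-F^*\le\left(1-\frac{\mu}{\max\{\mu,\,LH_{\mathcal{P}}(a)^2\|a\|^2\}}\right)^t(F(p^0)-F^* )\quad\forall t\ge0.$$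
   Context: $a_i$ is the $i$-th row of $a$; $\|a\|$ is the spectral norm; $\Pi_{\mathcal{P}}$ Euclidean projection. Hoffman constant: $H_{\mathcal{X}}(A)$ is the smallest $H>0$ such that for every $z$ with $\mathcal{X}\cap\{x:Ax=z\}\neq\emptyset$, setting $\mathcal{S}=\{x:Ax=z\}$, $\|x-\Pi_{\mathcal{X}\cap\mathcal{S}}(x)\|\le H\|Ax-z\|$ for all $x\in\mathcal{X}$. *)

theory Defs
  imports "HOL-Analysis.Analysis"
begin

definition grad :: "('a::euclidean_space \<Rightarrow> real) \<Rightarrow> 'a \<Rightarrow> 'a" where
  "grad f x = (SOME g. (f has_derivative (\<lambda>v. g \<bullet> v)) (at x))"

definition spec_norm :: "real^'m^'n \<Rightarrow> real" where
  "spec_norm A = onorm (\<lambda>x. A *v x)"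

definition hoffman :: "(real^'m) set \<Rightarrow> real^'m^'n \<Rightarrow> real" where
  "hoffman X A = Inf {H. H > 0 \<and>
     (\<forall>z. X \<inter> {x. A *v x = z} \<noteq> {} \<longrightarrow>
        (\<forall>x\<in>X. norm (x - closest_point (X \<inter> {x. A *v x = z}) x) \<le> H * norm (A *v x - z)))}"

definition htilde_i :: "real \<Rightarrow> real \<Rightarrow> real \<Rightarrow> real" where
  "htilde_i Bi rl r = (if r > rl then - Bi * ln r
     else Bi / (2 * rl\<^sup>2) * (r - rl)\<^sup>2 - Bi / rl * (r - rl) - Bi * ln rl)"

end

theory Submission
  imports Defs
begin


definition dphi :: "real \<Rightarrow> real \<Rightarrow> real \<Rightarrow> real" where
  "dphi Bi rl r = (if r > rl then - Bi / r else Bi / rl\<^sup>2 * (r - rl) - Bi / rl)"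

lemma deriv_piece:
  fixes f g :: "real \<Rightarrow> real"
  assumes "(f has_real_derivative D) (at x)" "(g has_real_derivative D) (at x)" "f x = g x"
  shows "((\<lambda>y. if y > x then f y else g y) has_real_derivative D) (at x)"
proof -
  let ?h = "\<lambda>y. if y > x then f y else g y"
  have "((\<lambda>y. (f y - f x) / (y - x)) \<longlongrightarrow> D) (at x)" using assms(1) has_field_derivative_iff by blast
  hence r: "((\<lambda>y. (f y - f x) / (y - x)) \<longlongrightarrow> D) (at_right x)" by (rule filterlim_mono) (simp_all add: at_le)
  have "((\<lambda>y. (g y - g x) / (y - x)) \<longlongrightarrow> D) (at x)" using assms(2) has_field_derivative_iff by blast
  hence l: "((\<lambda>y. (g y - g x) / (y - x)) \<longlongrightarrow> D) (at_left x)" by (rule filterlim_mono) (simp_all add: at_le)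
  have r': "((\<lambda>y. (?h y - ?h x) / (y - x)) \<longlongrightarrow> D) (at_right x)"
    apply (rule Lim_transform_eventually[OF r])
    using assms(3) by (auto simp: eventually_at_right_less eventually_at_filter intro!: eventually_mono[OF eventually_at_right_less])
  have l': "((\<lambda>y. (?h y - ?h x) / (y - x)) \<longlongrightarrow> D) (at_left x)"
    apply (rule Lim_transform_eventually[OF l])
  proof (rule eventually_mono)
    show "eventually (\<lambda>y. y \<in> {x - 1<..<x}) (at_left x)" by (rule eventually_at_left_real) simp
  qed (use assms(3) in auto)
  have "((\<lambda>y. (?h y - ?h x) / (y - x)) \<longlongrightarrow> D) (at x)"
    using l' r' by (rule filterlim_split_at_real)
  thus ?thesis using has_field_derivative_iff by blast
qed

lemma htilde_deriv:
  assumes "Bi > 0" "rl > 0"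
  shows "(htilde_i Bi rl has_real_derivative dphi Bi rl r) (at r)"
proof -
  consider "r > rl" | "r < rl" | "r = rl" by linarith
  thus ?thesis
  proof cases
    case 1
    have "((\<lambda>y. - Bi * ln y) has_real_derivative dphi Bi rl r) (at r)"
      using 1 assms by (auto intro!: derivative_eq_intros simp: field_simps dphi_def)
    thus ?thesis
      apply (rule has_field_derivative_transform_within_open[where S="{rl<..}"])
      using 1 by (auto simp: htilde_i_def dphi_def)
  next
    case 2
    have "((\<lambda>y. Bi / (2 * rl\<^sup>2) * (y - rl)\<^sup>2 - Bi / rl * (y - rl) - Bi * ln rl) has_real_derivative dphi Bi rl r) (at r)"
      using assms 2 by (auto simp: dphi_def intro!: derivative_eq_intros simp: field_simps power2_eq_square)
    thus ?thesis
      apply (rule has_field_derivative_transform_within_open[where S="{..<rl}"])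
      using 2 by (auto simp: htilde_i_def dphi_def)
  next
    case 3
    have a: "((\<lambda>y. - Bi * ln y) has_real_derivative - Bi / r) (at r)"
      using 3 assms by (auto intro!: derivative_eq_intros simp: field_simps)
    have b: "((\<lambda>y. Bi / (2 * rl\<^sup>2) * (y - rl)\<^sup>2 - Bi / rl * (y - rl) - Bi * ln rl) has_real_derivative - Bi / r) (at r)"
      using assms 3 by (auto intro!: derivative_eq_intros simp: field_simps power2_eq_square)
    have "htilde_i Bi rl = (\<lambda>y. if y > r then - Bi * ln y else Bi / (2 * rl\<^sup>2) * (y - rl)\<^sup>2 - Bi / rl * (y - rl) - Bi * ln rl)"
      using 3 by (auto simp: htilde_i_def fun_eq_iff)
    thus ?thesis using deriv_piece[OF a b] 3 by (simp add: dphi_def)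
  qed
qed



lemma dphi_hi_mono:
  fixes Bi rl r t :: real
  assumes "Bi > 0" "rl > 0" "rl \<le> r" "r \<le> t"
  shows "Bi / t - Bi / r \<ge> - Bi / rl\<^sup>2 * (t - r)"
    and "Bi / r - Bi / t \<ge> Bi / t\<^sup>2 * (t - r)"
    and "Bi / r - Bi / t \<le> Bi / rl\<^sup>2 * (t - r)"
proof -
  have rp1: "r > 0" using assms by linarith
  have rp2: "t > 0" using assms by linarith
  note rp = rp1 rp2
  have e: "Bi / r - Bi / t = Bi * (t - r) / (r * t)" using rp by (simp add: field_simps)
  have "r * t \<ge> rl * rl" using assms by (intro mult_mono) auto
  hence "Bi * (t - r) / (r * t) \<le> Bi * (t - r) / (rl * rl)"
    using assms rp by (intro divide_left_mono) auto
  thus "Bi / r - Bi / t \<le> Bi / rl\<^sup>2 * (t - r)" using e by (simp add: power2_eq_square)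
  thus "Bi / t - Bi / r \<ge> - Bi / rl\<^sup>2 * (t - r)" by simp
  have "r * t \<le> t * t" using assms by (intro mult_mono) auto
  hence "Bi * (t - r) / (r * t) \<ge> Bi * (t - r) / (t * t)"
    using assms rp by (intro divide_left_mono) auto
  thus "Bi / r - Bi / t \<ge> Bi / t\<^sup>2 * (t - r)" using e by (simp add: power2_eq_square)
qed


lemma lin3: "(K::real) * (t - c) - K * (r - c) = K * (t - r)" "(K::real) * (t - c) + K * (c - r) = K * (t - r)"
   "(K::real) * (c - r) = - (K * (r - c))" by algebra+

lemma dphi_lip:
  fixes Bi rl r t :: real
  assumes "Bi > 0" "rl > 0" "r \<le> t"
  shows "dphi Bi rl t - dphi Bi rl r \<le> Bi / rl\<^sup>2 * (t - r)"
proof -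
  consider "t \<le> rl" | "rl < r" | "r \<le> rl" "rl < t" using assms by linarith
  thus ?thesis
  proof cases
    case 1
    have "dphi Bi rl t - dphi Bi rl r = Bi / rl\<^sup>2 * (t - rl) - Bi / rl\<^sup>2 * (r - rl)"
      using 1 assms by (simp add: dphi_def field_simps)
    also have "\<dots> = Bi / rl\<^sup>2 * (t - r)" by (rule lin3)
    finally show ?thesis by simp
  next
    case 2 thus ?thesis using assms dphi_hi_mono(3)[of Bi rl r t] by (simp add: dphi_def)
  next
    case 3
    have "Bi / rl - Bi / t \<le> Bi / rl\<^sup>2 * (t - rl)" using dphi_hi_mono(3)[of Bi rl rl t] assms 3 by simp
    moreover have "dphi Bi rl r = Bi / rl\<^sup>2 * (r - rl) - Bi / rl" using 3 by (simp add: dphi_def)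
    moreover have "dphi Bi rl t = - Bi / t" using 3 by (simp add: dphi_def)
    moreover have "Bi / rl\<^sup>2 * (t - rl) - Bi / rl\<^sup>2 * (r - rl) = Bi / rl\<^sup>2 * (t - r)" by (rule lin3)
    ultimately show ?thesis by linarith
  qed
qed

lemma dphi_strong:
  fixes Bi rl r t R :: real
  assumes "Bi > 0" "rl > 0" "r \<le> t" "t \<le> R" "rl \<le> R"
  shows "dphi Bi rl t - dphi Bi rl r \<ge> Bi / R\<^sup>2 * (t - r)"
proof -
  have Rp: "R > 0" using assms by auto
  have k: "Bi / R\<^sup>2 \<le> Bi / rl\<^sup>2" using assms by (intro divide_left_mono power_mono mult_pos_pos) auto
  have k2: "Bi / R\<^sup>2 \<le> Bi / u\<^sup>2" if "u > rl" "u \<le> R" for u using assms that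
    by (intro divide_left_mono power_mono mult_pos_pos) auto
  consider "t \<le> rl" | "rl < r" | "r \<le> rl" "rl < t" using assms by linarith
  thus ?thesis
  proof cases
    case 1
    have "Bi / R\<^sup>2 * (t - r) \<le> Bi / rl\<^sup>2 * (t - r)" using k assms by (intro mult_right_mono) auto
    moreover have "dphi Bi rl t - dphi Bi rl r = Bi / rl\<^sup>2 * (t - rl) - Bi / rl\<^sup>2 * (r - rl)"
      using 1 assms by (simp add: dphi_def field_simps)
    moreover have "Bi / rl\<^sup>2 * (t - rl) - Bi / rl\<^sup>2 * (r - rl) = Bi / rl\<^sup>2 * (t - r)" by (rule lin3)
    ultimately show ?thesis by linarith
  next
    case 2
    have "Bi / R\<^sup>2 * (t - r) \<le> Bi / t\<^sup>2 * (t - r)" using k2[of t] 2 assms by (intro mult_right_mono) auto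
    thus ?thesis using 2 assms dphi_hi_mono(2)[of Bi rl r t] by (simp add: dphi_def)
  next
    case 3
    have "Bi / R\<^sup>2 * (t - rl) \<le> Bi / t\<^sup>2 * (t - rl)" using k2[of t] 3 assms by (intro mult_right_mono) auto
    hence a: "Bi / rl - Bi / t \<ge> Bi / R\<^sup>2 * (t - rl)" using dphi_hi_mono(2)[of Bi rl rl t] assms 3 by simp
    have b: "Bi / R\<^sup>2 * (rl - r) \<le> Bi / rl\<^sup>2 * (rl - r)" using k 3 by (intro mult_right_mono) auto
    have "dphi Bi rl r = Bi / rl\<^sup>2 * (r - rl) - Bi / rl" using 3 by (simp add: dphi_def)
    moreover have "dphi Bi rl t = - Bi / t" using 3 by (simp add: dphi_def)
    moreover have "Bi / R\<^sup>2 * (t - rl) + Bi / R\<^sup>2 * (rl - r) = Bi / R\<^sup>2 * (t - r)" by (rule lin3)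
    moreover have "Bi / rl\<^sup>2 * (rl - r) = - (Bi / rl\<^sup>2 * (r - rl))" by (rule lin3)
    ultimately show ?thesis using a b by linarith
  qed
qed

lemma mvt_sign:
  fixes g g' :: "real \<Rightarrow> real"
  assumes d: "\<And>y. (g has_real_derivative g' y) (at y)" and g0: "g r = 0"
    and pos: "\<And>y. r \<le> y \<Longrightarrow> y \<le> s \<Longrightarrow> g' y \<ge> 0"
    and neg: "\<And>y. s \<le> y \<Longrightarrow> y \<le> r \<Longrightarrow> g' y \<le> 0"
  shows "g s \<ge> 0"
proof (cases "r \<le> s")
  case True
  have "g r \<le> g s"
  proof (rule DERIV_nonneg_imp_nondecreasing[OF True])
    fix x assume "r \<le> x" "x \<le> s"
    thus "\<exists>y. DERIV g x :> y \<and> y \<ge> 0" by (intro exI[of _ "g' x"] conjI d pos)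
  qed
  thus ?thesis using g0 by simp
next
  case False
  hence F: "s \<le> r" by simp
  have "g s \<ge> g r"
  proof (rule DERIV_nonpos_imp_nonincreasing[OF F])
    fix x assume "s \<le> x" "x \<le> r"
    thus "\<exists>y. DERIV g x :> y \<and> y \<le> 0" by (intro exI[of _ "g' x"] conjI d neg)
  qed
  thus ?thesis using g0 by simp
qed

lemma quad_deriv: "((\<lambda>y::real. c + D * (y - r) + K / 2 * (y - r)\<^sup>2) has_real_derivative (D + K * (x - r))) (at x)"
proof -
  have "((\<lambda>y::real. c + D * (y - r) + K / 2 * (y - r)\<^sup>2) has_real_derivative (0 + D * (1 - 0) + K / 2 * (of_nat 2 * ((1 - 0) * (x - r) ^ (2 - Suc 0))))) (at x)"
    by (intro DERIV_add DERIV_const DERIV_cmult DERIV_diff DERIV_ident DERIV_power)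
  moreover have "(0 + D * (1 - 0) + K / 2 * (of_nat 2 * ((1 - 0) * (x - r) ^ (2 - Suc 0)))) = D + K * (x - r)" by simp
  ultimately show ?thesis by metis
qed

lemma htilde_upper:
  fixes Bi rl r s :: real
  assumes "Bi > 0" "rl > 0"
  shows "htilde_i Bi rl s \<le> htilde_i Bi rl r + dphi Bi rl r * (s - r) + Bi / rl\<^sup>2 / 2 * (s - r)\<^sup>2"
proof -
  let ?K = "Bi / rl\<^sup>2"
  define g where "g y = htilde_i Bi rl r + dphi Bi rl r * (y - r) + ?K / 2 * (y - r)\<^sup>2 - htilde_i Bi rl y" for y
  have d: "(g has_real_derivative (dphi Bi rl r + ?K * (y - r) - dphi Bi rl y)) (at y)" for y
    unfolding g_def by (intro DERIV_diff quad_deriv htilde_deriv assms)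
  have "g s \<ge> 0"
  proof (rule mvt_sign[OF d])
    show "g r = 0" by (simp add: g_def)
    fix y
    show "r \<le> y \<Longrightarrow> y \<le> s \<Longrightarrow> 0 \<le> dphi Bi rl r + ?K * (y - r) - dphi Bi rl y"
      using dphi_lip[OF assms, of r y] by simp
    show "s \<le> y \<Longrightarrow> y \<le> r \<Longrightarrow> dphi Bi rl r + ?K * (y - r) - dphi Bi rl y \<le> 0"
      using dphi_lip[OF assms, of y r] lin3(3)[of ?K y r] by linarith
  qed
  thus ?thesis by (simp add: g_def)
qed

lemma htilde_lower:
  fixes Bi rl r s R :: real
  assumes "Bi > 0" "rl > 0" "rl \<le> R" "r \<le> R" "s \<le> R"
  shows "htilde_i Bi rl s \<ge> htilde_i Bi rl r + dphi Bi rl r * (s - r) + Bi / R\<^sup>2 / 2 * (s - r)\<^sup>2"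
proof -
  let ?K = "Bi / R\<^sup>2"
  define g where "g y = htilde_i Bi rl y - (htilde_i Bi rl r + dphi Bi rl r * (y - r) + ?K / 2 * (y - r)\<^sup>2)" for y
  have d: "(g has_real_derivative (dphi Bi rl y - (dphi Bi rl r + ?K * (y - r)))) (at y)" for y
    unfolding g_def by (intro DERIV_diff quad_deriv htilde_deriv assms)
  have "g s \<ge> 0"
  proof (rule mvt_sign[OF d])
    show "g r = 0" by (simp add: g_def)
    fix y
    show "r \<le> y \<Longrightarrow> y \<le> s \<Longrightarrow> 0 \<le> dphi Bi rl y - (dphi Bi rl r + ?K * (y - r))"
      using dphi_strong[OF assms(1,2), of r y R] assms by simp
    show "s \<le> y \<Longrightarrow> y \<le> r \<Longrightarrow> dphi Bi rl y - (dphi Bi rl r + ?K * (y - r)) \<le> 0"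
      using dphi_strong[OF assms(1,2), of y r R] assms lin3(3)[of ?K y r] by linarith
  qed
  thus ?thesis by (simp add: g_def)
qed



lemma finite_signs: "finite {\<sigma>::real^'m. \<forall>j. \<sigma>$j \<in> {-1,0,1}}"
proof -
  have "{\<sigma>::real^'m. \<forall>j. \<sigma>$j \<in> {-1,0,1}} \<subseteq> (\<lambda>g. \<chi> j. g j) ` ((UNIV::'m set) \<rightarrow>\<^sub>E {-1,0,1::real})"
  proof
    fix \<sigma> :: "real^'m" assume "\<sigma> \<in> {\<sigma>. \<forall>j. \<sigma>$j \<in> {-1,0,1}}"
    hence "(\<lambda>j. \<sigma>$j) \<in> UNIV \<rightarrow>\<^sub>E {-1,0,1::real}" by auto
    moreover have "\<sigma> = (\<chi> j. (\<lambda>j. \<sigma>$j) j)" by simp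
    ultimately show "\<sigma> \<in> (\<lambda>g. \<chi> j. g j) ` ((UNIV::'m set) \<rightarrow>\<^sub>E {-1,0,1::real})" by blast
  qed
  moreover have "finite ((UNIV::'m set) \<rightarrow>\<^sub>E {-1,0,1::real})" by (intro finite_PiE) (auto simp: finite_UNIV)
  ultimately show ?thesis using finite_subset by blast
qed

lemma closed_conf: "closed {e::real^'m. \<forall>j. 0 \<le> e$j * d$j \<and> \<bar>e$j\<bar> \<le> \<bar>d$j\<bar>}"
  by (intro closed_Collect_all closed_Collect_conj closed_Collect_le continuous_intros)

lemma closed_W: "closed {w::real^'m. norm w = 1 \<and> (\<forall>j. w$j * (if \<sigma>$j = 0 then 1 else 0) = 0 \<and> 0 \<le> w$j * \<sigma>$j)}"
  by (intro closed_Collect_all closed_Collect_conj closed_Collect_le closed_Collect_eq continuous_intros)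

definition confm :: "real^'m \<Rightarrow> real^'m \<Rightarrow> bool" where
  "confm e d \<longleftrightarrow> (\<forall>j. 0 \<le> e$j * d$j \<and> \<bar>e$j\<bar> \<le> \<bar>d$j\<bar>)"

definition kfree :: "(real^'m \<Rightarrow> 'b::real_vector) \<Rightarrow> real^'m \<Rightarrow> bool" where
  "kfree f e \<longleftrightarrow> \<not> (\<exists>v. v \<noteq> 0 \<and> f v = 0 \<and> (\<forall>j. (e$j = 0 \<longrightarrow> v$j = 0) \<and> 0 \<le> v$j * e$j))"

lemma shrink_coord:
  fixes e v t :: real
  assumes "e = 0 \<longrightarrow> v = 0" "0 \<le> v * e" "t * \<bar>v\<bar> \<le> \<bar>e\<bar>" "t \<ge> 0"
  shows "\<bar>e - t * v\<bar> = \<bar>e\<bar> - t * \<bar>v\<bar>" "0 \<le> (e - t * v) * e"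
  using assms by (auto simp: abs_if mult_le_0_iff zero_le_mult_iff split: if_splits)

lemma conf_trans:
  fixes e' e d :: real
  assumes "0 \<le> e' * e" "\<bar>e'\<bar> \<le> \<bar>e\<bar>" "0 \<le> e * d" "\<bar>e\<bar> \<le> \<bar>d\<bar>"
  shows "0 \<le> e' * d" "\<bar>e'\<bar> \<le> \<bar>d\<bar>"
  using assms by (auto simp: abs_if mult_le_0_iff zero_le_mult_iff split: if_splits)

lemma exists_kfree:
  fixes f :: "real^'m \<Rightarrow> 'b::euclidean_space"
  assumes lf: "linear f"
  shows "\<exists>e. f e = f d \<and> confm e d \<and> kfree f e"
proof -
  define Lam where "Lam = {e. f e = f d} \<inter> {e::real^'m. \<forall>j. 0 \<le> e$j * d$j \<and> \<bar>e$j\<bar> \<le> \<bar>d$j\<bar>}"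
  have cf: "continuous_on UNIV f" using lf by (simp add: linear_continuous_on linear_linear)
  have "closed {e. f e = f d}" using cf by (intro closed_Collect_eq) (auto intro: continuous_on_const)
  hence cl: "closed Lam" unfolding Lam_def by (intro closed_Int closed_conf)
  have "bounded Lam"
  proof -
    have "norm e \<le> (\<Sum>j\<in>UNIV. \<bar>d$j\<bar>)" if "e \<in> Lam" for e
    proof -
      have "norm e \<le> (\<Sum>j\<in>UNIV. \<bar>e$j\<bar>)" by (rule norm_le_l1_cart)
      also have "\<dots> \<le> (\<Sum>j\<in>UNIV. \<bar>d$j\<bar>)" using that unfolding Lam_def by (intro sum_mono) auto
      finally show ?thesis .
    qed
    thus ?thesis unfolding bounded_iff by blast
  qed
  hence cp: "compact Lam" using cl by (simp add: compact_eq_bounded_closed)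
  have ne: "Lam \<noteq> {}" unfolding Lam_def by (auto intro!: exI[of _ d])
  have "continuous_on Lam (\<lambda>e. \<Sum>j\<in>UNIV. \<bar>e$j\<bar>)" by (intro continuous_intros)
  then obtain e where eL: "e \<in> Lam" and emin: "\<And>e'. e' \<in> Lam \<Longrightarrow> (\<Sum>j\<in>UNIV. \<bar>e$j\<bar>) \<le> (\<Sum>j\<in>UNIV. \<bar>e'$j\<bar>)"
    using continuous_attains_inf[OF cp ne] by blast
  have "kfree f e"
  proof (rule ccontr)
    assume "\<not> kfree f e"
    then obtain v where v0: "v \<noteq> 0" and fv: "f v = 0" and vs: "\<And>j. (e$j = 0 \<longrightarrow> v$j = 0) \<and> 0 \<le> v$j * e$j"
      unfolding kfree_def by blast
    define T where "T = {\<bar>e$j\<bar> / \<bar>v$j\<bar> | j. v$j \<noteq> 0}"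
    obtain j0 where j0: "v$j0 \<noteq> 0" using v0 by (metis vec_eq_iff zero_index)
    have fT: "finite T" unfolding T_def by simp
    have neT: "T \<noteq> {}" unfolding T_def using j0 by blast
    define t where "t = Min T"
    have tpos: "t > 0"
    proof -
      have "\<forall>x\<in>T. x > 0"
      proof
        fix x assume "x \<in> T"
        then obtain j where x: "x = \<bar>e$j\<bar> / \<bar>v$j\<bar>" "v$j \<noteq> 0" unfolding T_def by blast
        hence "e$j \<noteq> 0" using vs[of j] by metis
        thus "x > 0" using x by simp
      qed
      thus ?thesis unfolding t_def using fT neT by simp
    qed
    have tle: "t * \<bar>v$j\<bar> \<le> \<bar>e$j\<bar>" for j
    proof (cases "v$j = 0")
      case True thus ?thesis by simp
    next
      case False
      hence "t \<le> \<bar>e$j\<bar> / \<bar>v$j\<bar>" unfolding t_def T_def using fT by (intro Min_le) (auto simp: T_def)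
      thus ?thesis using False by (simp add: field_simps)
    qed
    define e' where "e' = e - t *\<^sub>R v"
    have co: "\<bar>e'$j\<bar> = \<bar>e$j\<bar> - t * \<bar>v$j\<bar>" "0 \<le> e'$j * e$j" for j
      using shrink_coord[of "e$j" "v$j" t] vs[of j] tle[of j] tpos unfolding e'_def by auto
    have "e' \<in> Lam"
    proof -
      have "f e' = f d" using eL fv lf unfolding e'_def Lam_def by (simp add: linear_diff linear_scale)
      moreover have "0 \<le> e'$j * d$j \<and> \<bar>e'$j\<bar> \<le> \<bar>d$j\<bar>" for j
        using conf_trans[of "e'$j" "e$j" "d$j"] co[of j] eL tpos unfolding Lam_def by auto
      ultimately show ?thesis unfolding Lam_def by auto
    qed
    hence "(\<Sum>j\<in>UNIV. \<bar>e$j\<bar>) \<le> (\<Sum>j\<in>UNIV. \<bar>e'$j\<bar>)" by (rule emin)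
    also have "\<dots> = (\<Sum>j\<in>UNIV. \<bar>e$j\<bar>) - t * (\<Sum>j\<in>UNIV. \<bar>v$j\<bar>)"
      by (simp add: co sum_subtractf sum_distrib_left)
    finally have "t * (\<Sum>j\<in>UNIV. \<bar>v$j\<bar>) \<le> 0" by simp
    moreover have "(\<Sum>j\<in>UNIV. \<bar>v$j\<bar>) > 0"
    proof -
      have "(\<Sum>j\<in>UNIV. \<bar>v$j\<bar>) \<ge> \<bar>v$j0\<bar>" by (rule member_le_sum) auto
      thus ?thesis using j0 by simp
    qed
    ultimately show False using tpos by (simp add: mult_le_0_iff)
  qed
  thus ?thesis using eL unfolding Lam_def confm_def by blast
qed


definition Wset :: "real^'m \<Rightarrow> (real^'m) set" where
  "Wset \<sigma> = {w::real^'m. norm w = 1 \<and> (\<forall>j. w$j * (if \<sigma>$j = 0 then 1 else 0) = 0 \<and> 0 \<le> w$j * \<sigma>$j)}"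

lemma compact_W: "compact (Wset \<sigma>)"
proof -
  have "bounded (Wset \<sigma>)" unfolding bounded_iff Wset_def by auto
  moreover have "closed (Wset \<sigma>)" unfolding Wset_def by (rule closed_W)
  ultimately show ?thesis by (simp add: compact_eq_bounded_closed)
qed

lemma good_const:
  fixes f :: "real^'m \<Rightarrow> 'b::euclidean_space"
  assumes lf: "linear f" and good: "\<forall>w\<in>Wset \<sigma>. f w \<noteq> 0"
  shows "\<exists>c>0. \<forall>w\<in>Wset \<sigma>. c \<le> norm (f w)"
proof (cases "Wset \<sigma> = {}")
  case True thus ?thesis by (intro exI[of _ 1]) auto
next
  case False
  have cf: "continuous_on UNIV f" using lf by (simp add: linear_continuous_on linear_linear)
  hence "continuous_on (Wset \<sigma>) (\<lambda>w. norm (f w))" by (intro continuous_intros) (auto intro: continuous_on_subset)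
  then obtain w0 where "w0 \<in> Wset \<sigma>" "\<And>w. w \<in> Wset \<sigma> \<Longrightarrow> norm (f w0) \<le> norm (f w)"
    using continuous_attains_inf[OF compact_W False] by blast
  thus ?thesis using good by (intro exI[of _ "norm (f w0)"]) auto
qed

lemma conformal:
  fixes f :: "real^'m \<Rightarrow> 'b::euclidean_space"
  assumes lf: "linear f"
  shows "\<exists>C\<ge>0. \<forall>d. \<exists>e. f e = f d \<and> confm e d \<and> norm e \<le> C * norm (f d)"
proof -
  define good where "good \<sigma> \<longleftrightarrow> (\<forall>w\<in>Wset \<sigma>. f w \<noteq> 0)" for \<sigma> :: "real^'m"
  have "\<forall>\<sigma>. \<exists>c. good \<sigma> \<longrightarrow> c > 0 \<and> (\<forall>w\<in>Wset \<sigma>. c \<le> norm (f w))"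
    using good_const[OF lf] unfolding good_def by blast
  then obtain c where c: "\<And>\<sigma>. good \<sigma> \<Longrightarrow> c \<sigma> > 0 \<and> (\<forall>w\<in>Wset \<sigma>. c \<sigma> \<le> norm (f w))"
    by metis
  define Sg where "Sg = {\<sigma>::real^'m. \<forall>j. \<sigma>$j \<in> {-1,0,1}}"
  define C where "C = (\<Sum>\<sigma>\<in>Sg. if good \<sigma> then 1 / c \<sigma> else 0)"
  have nn: "\<And>\<sigma>. 0 \<le> (if good \<sigma> then 1 / c \<sigma> else 0)" using c by (simp add: less_imp_le)
  have C0: "C \<ge> 0" unfolding C_def by (intro sum_nonneg nn)
  have Cge: "1 / c \<sigma> \<le> C" if "\<sigma> \<in> Sg" "good \<sigma>" for \<sigma>
  proof -
    have "(if good \<sigma> then 1 / c \<sigma> else 0) \<le> C" unfolding C_def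
      using finite_signs that(1) unfolding Sg_def by (intro member_le_sum nn) auto
    thus ?thesis using that by simp
  qed
  have "\<forall>d. \<exists>e. f e = f d \<and> confm e d \<and> norm e \<le> C * norm (f d)"
  proof
    fix d
    obtain e where fe: "f e = f d" and ce: "confm e d" and ke: "kfree f e" using exists_kfree[OF lf] by blast
    have "norm e \<le> C * norm (f e)"
    proof (cases "e = 0")
      case True thus ?thesis using C0 by simp
    next
      case False
      define \<sigma> where "\<sigma> = (\<chi> j. sgn (e$j))"
      have ne: "norm e > 0" using False by simp
      define w where "w = (1 / norm e) *\<^sub>R e"
      have sS: "\<sigma> \<in> Sg" unfolding Sg_def \<sigma>_def by (auto simp: sgn_real_def)
      have wj: "w$j = e$j / norm e" for j unfolding w_def by simp
      have wn: "norm w = 1" unfolding w_def using ne by simp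
      have wc: "w$j * (if \<sigma>$j = 0 then 1 else 0) = 0 \<and> 0 \<le> w$j * \<sigma>$j" for j
      proof -
        have "w$j * \<sigma>$j = \<bar>e$j\<bar> / norm e" unfolding wj \<sigma>_def by (simp add: abs_sgn)
        moreover have "\<sigma>$j = 0 \<Longrightarrow> w$j = 0" unfolding wj \<sigma>_def by (simp add: sgn_real_def split: if_splits)
        ultimately show ?thesis by simp
      qed
      have wW: "w \<in> Wset \<sigma>" unfolding Wset_def using wn wc by blast
      have gd: "good \<sigma>"
        unfolding good_def
      proof
        fix w' assume w': "w' \<in> Wset \<sigma>"
        show "f w' \<noteq> 0"
        proof
          assume fw: "f w' = 0"
          have "w' \<noteq> 0" using w' unfolding Wset_def by auto
          moreover have "(e$j = 0 \<longrightarrow> w'$j = 0) \<and> 0 \<le> w'$j * e$j" for j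
          proof -
            have a1: "w'$j * (if \<sigma>$j = 0 then 1 else 0) = 0" and a2: "0 \<le> w'$j * \<sigma>$j"
              using w' unfolding Wset_def by auto
            have s: "\<sigma>$j = sgn (e$j)" unfolding \<sigma>_def by simp
            have "e$j = 0 \<longrightarrow> w'$j = 0" using a1 s by auto
            moreover have "w'$j * e$j = (w'$j * \<sigma>$j) * \<bar>e$j\<bar>" unfolding s
              by (metis mult.assoc sgn_mult_abs)
            moreover have "0 \<le> (w'$j * \<sigma>$j) * \<bar>e$j\<bar>" using a2 by simp
            ultimately show ?thesis by metis
          qed
          ultimately show False using ke fw unfolding kfree_def by blast
        qed
      qed
      have "c \<sigma> \<le> norm (f w)" using c[OF gd] wW by blast
      also have "f w = (1 / norm e) *\<^sub>R f e" unfolding w_def using lf by (simp add: linear_scale)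
      finally have "c \<sigma> \<le> norm (f e) / norm e" using ne by simp
      hence "norm e \<le> norm (f e) / c \<sigma>" using c[OF gd] ne by (simp add: field_simps)
      also have "\<dots> = (1 / c \<sigma>) * norm (f e)" by simp
      also have "\<dots> \<le> C * norm (f e)" using Cge[OF sS gd] by (intro mult_right_mono) auto
      finally show ?thesis .
    qed
    thus "\<exists>e. f e = f d \<and> confm e d \<and> norm e \<le> C * norm (f d)" using fe ce by auto
  qed
  thus ?thesis using C0 by blast
qed



lemma closed_simplex: "closed {q::real^'m. (\<forall>j. q$j \<ge> 0) \<and> (\<Sum>j\<in>UNIV. q$j) = s}"
  by (intro closed_Collect_conj closed_Collect_all closed_Collect_le closed_Collect_eq continuous_intros)

lemma closed_lin: "closed {x::real^'m. (a::real^'m^'n) *v x = z}"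
proof -
  have "continuous_on UNIV (\<lambda>x::real^'m. a *v x)"
    by (simp add: linear_continuous_on matrix_vector_mul_linear linear_linear)
  thus ?thesis by (intro closed_Collect_eq) (auto intro: continuous_on_const)
qed

lemma pos_coord:
  fixes x y0 e :: real
  assumes "x \<ge> 0" "y0 \<ge> 0" "0 \<le> e * (x - y0)" "\<bar>e\<bar> \<le> \<bar>x - y0\<bar>"
  shows "x - e \<ge> 0"
proof (cases "x - y0 \<ge> 0")
  case True thus ?thesis using assms by linarith
next
  case False
  hence "e \<le> 0" using assms(3) by (simp add: zero_le_mult_iff)
  thus ?thesis using assms by linarith
qed

lemma hoffman_exists:
  fixes a :: "real^'m^'n" and s :: real
  assumes P: "P = {q. (\<forall>j. q$j \<ge> 0) \<and> (\<Sum>j\<in>UNIV. q$j) = s}"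
  shows "\<exists>H>0. \<forall>z. \<forall>x\<in>P. P \<inter> {x. a *v x = z} \<noteq> {} \<longrightarrow>
            norm (x - closest_point (P \<inter> {x. a *v x = z}) x) \<le> H * norm (a *v x - z)"
proof -
  define f where "f q = (a *v q, \<Sum>j\<in>UNIV. q$j)" for q :: "real^'m"
  have b1: "bounded_linear (\<lambda>q::real^'m. a *v q)" by (simp add: linear_linear)
  have b2: "bounded_linear (\<lambda>q::real^'m. \<Sum>j\<in>UNIV. q$j)" by (rule bounded_linear_sum) (rule bounded_linear_vec_nth)
  have "bounded_linear f" unfolding f_def by (rule bounded_linear_Pair[OF b1 b2])
  hence lf: "linear f" by (rule bounded_linear.linear)
  obtain C where C0: "C \<ge> 0" and C: "\<And>d. \<exists>e. f e = f d \<and> confm e d \<and> norm e \<le> C * norm (f d)"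
    using conformal[OF lf] by blast
  have "\<forall>z. \<forall>x\<in>P. P \<inter> {x. a *v x = z} \<noteq> {} \<longrightarrow>
            norm (x - closest_point (P \<inter> {x. a *v x = z}) x) \<le> (C + 1) * norm (a *v x - z)"
  proof (intro allI ballI impI)
    fix z x assume xP: "x \<in> P" and ne: "P \<inter> {x. a *v x = z} \<noteq> {}"
    then obtain y0 where y0P: "y0 \<in> P" and ay0: "a *v y0 = z" by blast
    define d where "d = x - y0"
    obtain e where fe: "f e = f d" and ce: "confm e d" and ne: "norm e \<le> C * norm (f d)" using C by blast
    have sx: "(\<Sum>j\<in>UNIV. x$j) = s" and sy0: "(\<Sum>j\<in>UNIV. y0$j) = s" using xP y0P P by auto
    have fd: "f d = (a *v x - z, 0)" unfolding f_def d_def using sx sy0 ay0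
      by (simp add: matrix_vector_mult_diff_distrib sum_subtractf)
    have nfd: "norm (f d) = norm (a *v x - z)" unfolding fd by (simp add: norm_Pair)
    define y where "y = x - e"
    have fy: "f y = f y0" unfolding y_def using lf fe by (simp add: linear_diff d_def)
    have ay: "a *v y = z" using fy ay0 unfolding f_def by simp
    have sy: "(\<Sum>j\<in>UNIV. y$j) = s" using fy sy0 unfolding f_def by simp
    have "y$j \<ge> 0" for j
    proof -
      have "x$j \<ge> 0" "y0$j \<ge> 0" using xP y0P P by auto
      moreover have "0 \<le> e$j * (x$j - y0$j)" "\<bar>e$j\<bar> \<le> \<bar>x$j - y0$j\<bar>" using ce unfolding confm_def d_def by auto
      ultimately show ?thesis unfolding y_def vector_minus_component by (rule pos_coord)
    qed
    hence yS: "y \<in> P \<inter> {x. a *v x = z}" unfolding P using sy ay by blast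
    have cl: "closed (P \<inter> {x. a *v x = z})" unfolding P by (intro closed_Int closed_simplex closed_lin)
    have "norm (x - closest_point (P \<inter> {x. a *v x = z}) x) = dist x (closest_point (P \<inter> {x. a *v x = z}) x)"
      by (simp add: dist_norm)
    also have "\<dots> \<le> dist x y" by (rule closest_point_le[OF cl yS])
    also have "\<dots> = norm e" unfolding y_def by (simp add: dist_norm)
    also have "\<dots> \<le> C * norm (a *v x - z)" using ne nfd by simp
    also have "\<dots> \<le> (C + 1) * norm (a *v x - z)" by (intro mult_right_mono) auto
    finally show "norm (x - closest_point (P \<inter> {x. a *v x = z}) x) \<le> (C + 1) * norm (a *v x - z)" .
  qed
  moreover have "C + 1 > 0" using C0 by simp
  ultimately show ?thesis by blast
qed

lemma hoffman_bound:
  fixes a :: "real^'m^'n" and s :: real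
  assumes P: "P = {q. (\<forall>j. q$j \<ge> 0) \<and> (\<Sum>j\<in>UNIV. q$j) = s}"
    and xP: "x \<in> P" and ne: "P \<inter> {x. a *v x = z} \<noteq> {}"
  shows "norm (x - closest_point (P \<inter> {x. a *v x = z}) x) \<le> hoffman P a * norm (a *v x - z)"
proof -
  define S where "S = {H. H > 0 \<and>
     (\<forall>z. P \<inter> {x. a *v x = z} \<noteq> {} \<longrightarrow>
        (\<forall>x\<in>P. norm (x - closest_point (P \<inter> {x. a *v x = z}) x) \<le> H * norm (a *v x - z)))}"
  have hS: "hoffman P a = Inf S" unfolding hoffman_def S_def by simp
  obtain H where "H > 0" "\<forall>z. \<forall>x\<in>P. P \<inter> {x. a *v x = z} \<noteq> {} \<longrightarrow>
            norm (x - closest_point (P \<inter> {x. a *v x = z}) x) \<le> H * norm (a *v x - z)"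
    using hoffman_exists[OF P] by blast
  hence HS: "H \<in> S" unfolding S_def by blast
  let ?n = "norm (x - closest_point (P \<inter> {x. a *v x = z}) x)"
  let ?r = "norm (a *v x - z)"
  show ?thesis
  proof (cases "?r = 0")
    case True
    have "?n \<le> H * ?r" using HS xP ne unfolding S_def by blast
    thus ?thesis using True by simp
  next
    case False
    hence rp: "?r > 0" by simp
    have "?n / ?r \<le> Inf S"
    proof (rule cInf_greatest)
      show "S \<noteq> {}" using HS by blast
      fix H' assume "H' \<in> S"
      hence "?n \<le> H' * ?r" using xP ne unfolding S_def by blast
      thus "?n / ?r \<le> H'" using rp by (simp add: divide_le_eq)
    qed
    thus ?thesis using rp hS by (simp add: divide_le_eq)
  qed
qed



lemma grad_eq:
  fixes F :: "real^'m \<Rightarrow> real"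
  assumes d: "(F has_derivative (\<lambda>v. g \<bullet> v)) (at x)"
  shows "grad F x = g"
proof -
  have "\<exists>g. (F has_derivative (\<lambda>v. g \<bullet> v)) (at x)" using d by blast
  hence s: "(F has_derivative (\<lambda>v. grad F x \<bullet> v)) (at x)" unfolding grad_def by (rule someI_ex)
  have "(\<lambda>v. grad F x \<bullet> v) = (\<lambda>v. g \<bullet> v)" by (rule has_derivative_unique[OF s d])
  hence "grad F x \<bullet> (grad F x - g) = g \<bullet> (grad F x - g)" by metis
  hence "(grad F x - g) \<bullet> (grad F x - g) = 0" by (simp add: inner_diff_left)
  thus ?thesis by simp
qed

definition Fh :: "real^'m^'n \<Rightarrow> real^'n \<Rightarrow> real^'n \<Rightarrow> real^'m \<Rightarrow> real" where
  "Fh a B rl q = (\<Sum>i\<in>UNIV. htilde_i (B$i) (rl$i) ((a *v q)$i))"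

definition Gh :: "real^'m^'n \<Rightarrow> real^'n \<Rightarrow> real^'n \<Rightarrow> real^'m \<Rightarrow> real^'m" where
  "Gh a B rl q = (\<chi> j. \<Sum>i\<in>UNIV. dphi (B$i) (rl$i) ((a *v q)$i) * a$i$j)"

lemma Gh_inner: "Gh a B rl q \<bullet> v = (\<Sum>i\<in>UNIV. dphi (B$i) (rl$i) ((a *v q)$i) * (a *v v)$i)"
proof -
  have "Gh a B rl q \<bullet> v = (\<Sum>j\<in>UNIV. (\<Sum>i\<in>UNIV. dphi (B$i) (rl$i) ((a *v q)$i) * a$i$j) * v$j)"
    unfolding Gh_def inner_vec_def by simp
  also have "\<dots> = (\<Sum>j\<in>UNIV. \<Sum>i\<in>UNIV. dphi (B$i) (rl$i) ((a *v q)$i) * (a$i$j * v$j))"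
    by (simp add: sum_distrib_right mult.assoc)
  also have "\<dots> = (\<Sum>i\<in>UNIV. \<Sum>j\<in>UNIV. dphi (B$i) (rl$i) ((a *v q)$i) * (a$i$j * v$j))"
    by (rule sum.swap)
  also have "\<dots> = (\<Sum>i\<in>UNIV. dphi (B$i) (rl$i) ((a *v q)$i) * (a *v v)$i)"
    by (simp add: matrix_vector_mult_def sum_distrib_left)
  finally show ?thesis .
qed

lemma Fh_deriv:
  fixes a :: "real^'m^'n"
  assumes Bp: "\<forall>i. B$i > 0" and rp: "\<forall>i. rl$i > 0"
  shows "(Fh a B rl has_derivative (\<lambda>v. Gh a B rl q \<bullet> v)) (at q)"
proof -
  have lin: "bounded_linear (\<lambda>q::real^'m. (a *v q)$i)" for i
  proof -
    have "bounded_linear (\<lambda>q::real^'m. a *v q)" by (simp add: linear_linear)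
    thus ?thesis using bounded_linear_compose[OF bounded_linear_vec_nth] by blast
  qed
  have "((\<lambda>q. htilde_i (B$i) (rl$i) ((a *v q)$i)) has_derivative
          (\<lambda>v. dphi (B$i) (rl$i) ((a *v q)$i) * (a *v v)$i)) (at q)" for i
  proof -
    have "((\<lambda>q. (a *v q)$i) has_derivative (\<lambda>v. (a *v v)$i)) (at q)"
      by (rule bounded_linear_imp_has_derivative[OF lin])
    moreover have "(htilde_i (B$i) (rl$i) has_derivative (\<lambda>x. dphi (B$i) (rl$i) ((a *v q)$i) * x)) (at ((a *v q)$i))"
      using htilde_deriv[of "B$i" "rl$i" "(a *v q)$i"] Bp rp by (simp add: has_field_derivative_def)
    ultimately show ?thesis by (rule has_derivative_compose)
  qed
  hence "((\<lambda>q. \<Sum>i\<in>UNIV. htilde_i (B$i) (rl$i) ((a *v q)$i)) has_derivative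
          (\<lambda>v. \<Sum>i\<in>UNIV. dphi (B$i) (rl$i) ((a *v q)$i) * (a *v v)$i)) (at q)"
    by (intro has_derivative_sum)
  thus ?thesis unfolding Fh_def[abs_def] Gh_inner .
qed

lemma norm_sq_vec: "(norm (w::real^'n))\<^sup>2 = (\<Sum>i\<in>UNIV. (w$i)\<^sup>2)"
  by (subst power2_norm_eq_inner) (simp add: inner_vec_def power2_eq_square)

lemma Fh_upper:
  assumes Bp: "\<forall>i. B$i > 0" and rp: "\<forall>i. rl$i > 0" and KL: "\<forall>i. B$i / (rl$i)\<^sup>2 \<le> L"
  shows "Fh a B rl y \<le> Fh a B rl x + Gh a B rl x \<bullet> (y - x) + L / 2 * (norm (a *v (y - x)))\<^sup>2"
proof -
  let ?r = "\<lambda>i. (a *v x)$i" and ?s = "\<lambda>i. (a *v y)$i"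
  have df: "(a *v (y - x))$i = ?s i - ?r i" for i by (simp add: matrix_vector_mult_diff_distrib)
  have "Fh a B rl y = (\<Sum>i\<in>UNIV. htilde_i (B$i) (rl$i) (?s i))" unfolding Fh_def ..
  also have "\<dots> \<le> (\<Sum>i\<in>UNIV. htilde_i (B$i) (rl$i) (?r i) + dphi (B$i) (rl$i) (?r i) * (?s i - ?r i) + L / 2 * (?s i - ?r i)\<^sup>2)"
  proof (rule sum_mono)
    fix i
    have "htilde_i (B$i) (rl$i) (?s i) \<le> htilde_i (B$i) (rl$i) (?r i) + dphi (B$i) (rl$i) (?r i) * (?s i - ?r i) + B$i / (rl$i)\<^sup>2 / 2 * (?s i - ?r i)\<^sup>2"
      using htilde_upper Bp rp by blast
    moreover have "B$i / (rl$i)\<^sup>2 / 2 * (?s i - ?r i)\<^sup>2 \<le> L / 2 * (?s i - ?r i)\<^sup>2"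
      using KL by (intro mult_right_mono divide_right_mono) auto
    ultimately show "htilde_i (B$i) (rl$i) (?s i) \<le> htilde_i (B$i) (rl$i) (?r i) + dphi (B$i) (rl$i) (?r i) * (?s i - ?r i) + L / 2 * (?s i - ?r i)\<^sup>2"
      by linarith
  qed
  also have "\<dots> = Fh a B rl x + Gh a B rl x \<bullet> (y - x) + L / 2 * (norm (a *v (y - x)))\<^sup>2"
    unfolding Fh_def Gh_inner norm_sq_vec df by (simp add: sum.distrib sum_distrib_left)
  finally show ?thesis .
qed

lemma Fh_lower:
  assumes Bp: "\<forall>i. B$i > 0" and rp: "\<forall>i. rl$i > 0" and RR: "\<forall>i. rl$i \<le> R$i"
    and xR: "\<forall>i. (a *v x)$i \<le> R$i" and yR: "\<forall>i. (a *v y)$i \<le> R$i"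
    and mu: "\<forall>i. mu \<le> B$i / (R$i)\<^sup>2"
  shows "Fh a B rl y \<ge> Fh a B rl x + Gh a B rl x \<bullet> (y - x) + mu / 2 * (norm (a *v (y - x)))\<^sup>2"
proof -
  let ?r = "\<lambda>i. (a *v x)$i" and ?s = "\<lambda>i. (a *v y)$i"
  have df: "(a *v (y - x))$i = ?s i - ?r i" for i by (simp add: matrix_vector_mult_diff_distrib)
  have "Fh a B rl x + Gh a B rl x \<bullet> (y - x) + mu / 2 * (norm (a *v (y - x)))\<^sup>2 =
     (\<Sum>i\<in>UNIV. htilde_i (B$i) (rl$i) (?r i) + dphi (B$i) (rl$i) (?r i) * (?s i - ?r i) + mu / 2 * (?s i - ?r i)\<^sup>2)"
    unfolding Fh_def Gh_inner norm_sq_vec df by (simp add: sum.distrib sum_distrib_left)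
  also have "\<dots> \<le> (\<Sum>i\<in>UNIV. htilde_i (B$i) (rl$i) (?s i))"
  proof (rule sum_mono)
    fix i
    have "htilde_i (B$i) (rl$i) (?s i) \<ge> htilde_i (B$i) (rl$i) (?r i) + dphi (B$i) (rl$i) (?r i) * (?s i - ?r i) + B$i / (R$i)\<^sup>2 / 2 * (?s i - ?r i)\<^sup>2"
      using htilde_lower Bp rp RR xR yR by blast
    moreover have "mu / 2 * (?s i - ?r i)\<^sup>2 \<le> B$i / (R$i)\<^sup>2 / 2 * (?s i - ?r i)\<^sup>2"
      using mu by (intro mult_right_mono divide_right_mono) auto
    ultimately show "htilde_i (B$i) (rl$i) (?r i) + dphi (B$i) (rl$i) (?r i) * (?s i - ?r i) + mu / 2 * (?s i - ?r i)\<^sup>2 \<le> htilde_i (B$i) (rl$i) (?s i)"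
      by linarith
  qed
  also have "\<dots> = Fh a B rl y" unfolding Fh_def ..
  finally show ?thesis .
qed


lemma norm_add_sq: "(norm (w + c *\<^sub>R g))\<^sup>2 = (norm (w::'a::real_inner))\<^sup>2 + 2 * c * (g \<bullet> w) + c\<^sup>2 * (norm g)\<^sup>2"
  unfolding power2_norm_eq_inner by (simp add: inner_add_left inner_add_right inner_commute algebra_simps power2_eq_square)

lemma simplex_seg:
  assumes P: "P = {q::real^'m. (\<forall>j. q$j \<ge> 0) \<and> (\<Sum>j\<in>UNIV. q$j) = s}"
    and x: "x \<in> P" and y: "y \<in> P" and th: "0 \<le> \<theta>" "\<theta> \<le> 1"
  shows "x + \<theta> *\<^sub>R (y - x) \<in> P"
proof -
  have c: "(x + \<theta> *\<^sub>R (y - x))$j = (1 - \<theta>) * x$j + \<theta> * y$j" for j by (simp add: algebra_simps)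
  have "(1 - \<theta>) * x$j + \<theta> * y$j \<ge> 0" for j using x y th P by (intro add_nonneg_nonneg mult_nonneg_nonneg) auto
  moreover have "(\<Sum>j\<in>UNIV. (1 - \<theta>) * x$j + \<theta> * y$j) = (1 - \<theta>) * (\<Sum>j\<in>UNIV. x$j) + \<theta> * (\<Sum>j\<in>UNIV. y$j)"
    by (simp add: sum.distrib sum_distrib_left)
  moreover have "(\<Sum>j\<in>UNIV. x$j) = s" "(\<Sum>j\<in>UNIV. y$j) = s" using x y P by auto
  ultimately have "(\<Sum>j\<in>UNIV. (1 - \<theta>) * x$j + \<theta> * y$j) = s" by (simp add: algebra_simps)
  hence "(\<Sum>j\<in>UNIV. (x + \<theta> *\<^sub>R (y - x))$j) = s" by (simp only: c)
  moreover have "\<forall>j. (x + \<theta> *\<^sub>R (y - x))$j \<ge> 0" using \<open>\<And>j. (1 - \<theta>) * x$j + \<theta> * y$j \<ge> 0\<close> by (simp only: c) blast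
  ultimately show ?thesis unfolding P mem_Collect_eq by blast
qed

lemma combine_ineq:
  fixes Fxp Fx Fs gd nb r2 rho Lf H mu :: real
  assumes h1: "Fxp \<le> Fx + rho * gd + Lf / 2 * (rho\<^sup>2 * nb)"
    and h2: "gd \<le> Fs - Fx - mu / 2 * r2"
    and h3: "nb \<le> H\<^sup>2 * r2"
    and h4: "rho * (Lf * H\<^sup>2) \<le> mu"
    and rho: "rho \<ge> 0" and Lf: "Lf \<ge> 0" and r2: "r2 \<ge> 0"
  shows "Fxp - Fs \<le> (1 - rho) * (Fx - Fs)"
proof -
  have a: "rho * gd \<le> rho * (Fs - Fx - mu / 2 * r2)" using h2 rho by (rule mult_left_mono)
  have b: "Lf / 2 * (rho\<^sup>2 * nb) \<le> Lf / 2 * (rho\<^sup>2 * (H\<^sup>2 * r2))"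
    using h3 rho Lf by (intro mult_left_mono) auto
  have c: "(rho * r2 / 2) * (rho * (Lf * H\<^sup>2)) \<le> (rho * r2 / 2) * mu"
    using h4 rho r2 by (intro mult_left_mono) auto
  have e1: "Lf / 2 * (rho\<^sup>2 * (H\<^sup>2 * r2)) = (rho * r2 / 2) * (rho * (Lf * H\<^sup>2))"
    by (simp add: power2_eq_square algebra_simps)
  have e2: "rho * (Fs - Fx - mu / 2 * r2) = rho * (Fs - Fx) - (rho * r2 / 2) * mu"
    by (simp add: algebra_simps)
  have e3: "(1 - rho) * (Fx - Fs) = (Fx - Fs) + rho * (Fs - Fx)" by (simp add: algebra_simps)
  have "Fxp - Fs \<le> Fx + rho * gd + Lf / 2 * (rho\<^sup>2 * nb) - Fs" using h1 by simp
  also have "\<dots> \<le> Fx + rho * (Fs - Fx - mu / 2 * r2) + Lf / 2 * (rho\<^sup>2 * (H\<^sup>2 * r2)) - Fs"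
    using a b by simp
  also have "\<dots> = Fx + rho * (Fs - Fx) - (rho * r2 / 2) * mu + (rho * r2 / 2) * (rho * (Lf * H\<^sup>2)) - Fs"
    unfolding e1 e2 by simp
  also have "\<dots> \<le> Fx + rho * (Fs - Fx) - (rho * r2 / 2) * mu + (rho * r2 / 2) * mu - Fs"
    using c by simp
  also have "\<dots> = (1 - rho) * (Fx - Fs)" by (simp add: algebra_simps)
  finally show ?thesis .
qed

theorem theorem8:
  fixes a :: "real^'m^'n" and B :: "real^'n" and p :: "nat \<Rightarrow> real^'m"
    and P :: "(real^'m) set" and rbar rlow :: "real^'n"
    and F :: "real^'m \<Rightarrow> real" and mu L Fstar :: real
  assumes nonneg: "\<forall>i j. a $ i $ j \<ge> 0"
    and no_zero_row: "\<forall>i. \<exists>j. a $ i $ j \<noteq> 0"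
    and no_zero_col: "\<forall>j. \<exists>i. a $ i $ j \<noteq> 0"
    and Bpos: "\<forall>i. B $ i > 0"
    and P_def: "P = {q. (\<forall>j. q $ j \<ge> 0) \<and> (\<Sum>j\<in>UNIV. q $ j) = (\<Sum>i\<in>UNIV. \<bar>B $ i\<bar>)}"
    and rbar_def: "rbar = (\<chi> i. (\<Sum>k\<in>UNIV. \<bar>B $ k\<bar>) * (MAX j. \<bar>a $ i $ j\<bar>))"
    and rlow_def: "rlow = (\<chi> i. B $ i * (MAX j. \<bar>a $ i $ j\<bar>))"
    and F_def: "F = (\<lambda>q. \<Sum>i\<in>UNIV. htilde_i (B $ i) (rlow $ i) ((a *v q) $ i))"
    and mu_def: "mu = (MIN i. B $ i / (rbar $ i)\<^sup>2)"
    and L_def: "L = (MAX i. B $ i / (rlow $ i)\<^sup>2)"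
    and Fstar_def: "Fstar = (INF q\<in>P. F q)"
    and p0: "p 0 \<in> P"
    and step: "\<forall>t. p (Suc t) = closest_point P (p t - (1 / (L * (spec_norm a)\<^sup>2)) *\<^sub>R grad F (p t))"
  shows "\<forall>t. F (p t) - Fstar \<le>
     (1 - mu / max mu (L * (hoffman P a)\<^sup>2 * (spec_norm a)\<^sup>2)) ^ t * (F (p 0) - Fstar)"
proof -
  have Bp: "\<forall>i. B$i > 0" using Bpos .
  define s where "s = (\<Sum>i\<in>UNIV. \<bar>B$i\<bar>)"
  have s_ge: "B$i \<le> s" for i
  proof -
    have "\<bar>B$i\<bar> \<le> s" unfolding s_def by (rule member_le_sum) auto
    thus ?thesis by simp
  qed
  define am where "am i = (MAX j. \<bar>a$i$j\<bar>)" for i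
  have am_ge: "\<bar>a$i$j\<bar> \<le> am i" for i j unfolding am_def by (rule Max_ge) auto
  have am_pos: "am i > 0" for i
  proof -
    obtain j where "a$i$j \<noteq> 0" using no_zero_row by blast
    thus ?thesis using am_ge[of i j] by simp
  qed
  have rl_eq: "rlow$i = B$i * am i" for i by (simp add: rlow_def am_def)
  have rb_eq: "rbar$i = s * am i" for i by (simp add: rbar_def am_def s_def)
  have rlp: "\<forall>i. rlow$i > 0" using Bp am_pos rl_eq by simp
  have rlrb: "\<forall>i. rlow$i \<le> rbar$i" using s_ge am_pos rl_eq rb_eq by (simp add: mult_right_mono)
  have KL: "\<forall>i. B$i / (rlow$i)\<^sup>2 \<le> L" unfolding L_def by (auto intro: Max_ge)
  have mu_le: "\<forall>i. mu \<le> B$i / (rbar$i)\<^sup>2" unfolding mu_def by (auto intro: Min_le)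
  have mu_pos: "mu > 0"
  proof -
    have "mu \<in> range (\<lambda>i. B$i / (rbar$i)\<^sup>2)" unfolding mu_def by (rule Min_in) auto
    then obtain i where "mu = B$i / (rbar$i)\<^sup>2" by blast
    moreover have "rbar$i > 0" using rlp rlrb by (metis less_le_trans)
    ultimately show ?thesis using Bp by simp
  qed
  have L_pos: "L > 0"
  proof -
    fix i
    have "B$i > 0" "rlow$i > 0" using Bp rlp by auto
    hence "B$i / (rlow$i)\<^sup>2 > 0" by simp
    thus ?thesis using KL by (meson less_le_trans)
  qed
  have FF: "F = Fh a B rlow" unfolding F_def Fh_def[abs_def] by simp
  have gradF: "grad F q = Gh a B rlow q" for q unfolding FF by (rule grad_eq[OF Fh_deriv[OF Bp rlp]])
  have P_eq: "P = {q. (\<forall>j. q$j \<ge> 0) \<and> (\<Sum>j\<in>UNIV. q$j) = s}" unfolding P_def s_def ..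
  have cP: "closed P" unfolding P_eq by (rule closed_simplex)
  have bP: "bounded P"
  proof -
    have "norm q \<le> s" if "q \<in> P" for q
    proof -
      have "norm q \<le> (\<Sum>j\<in>UNIV. \<bar>q$j\<bar>)" by (rule norm_le_l1_cart)
      also have "\<dots> = (\<Sum>j\<in>UNIV. q$j)" using that P_eq by simp
      also have "\<dots> = s" using that P_eq by simp
      finally show ?thesis .
    qed
    thus ?thesis unfolding bounded_iff by blast
  qed
  have neP: "P \<noteq> {}" using p0 by blast
  have aR: "\<forall>i. (a *v q)$i \<le> rbar$i" if qP: "q \<in> P" for q
  proof
    fix i
    have qn: "q$j \<ge> 0" for j using qP P_eq by simp
    have "(a *v q)$i = (\<Sum>j\<in>UNIV. a$i$j * q$j)" by (simp add: matrix_vector_mult_def)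
    also have "\<dots> \<le> (\<Sum>j\<in>UNIV. am i * q$j)"
    proof (rule sum_mono)
      fix j
      have "a$i$j \<le> am i" using am_ge[of i j] by simp
      thus "a$i$j * q$j \<le> am i * q$j" using qn[of j] by (rule mult_right_mono)
    qed
    also have "\<dots> = am i * s" using qP P_eq by (simp add: sum_distrib_left[symmetric])
    finally show "(a *v q)$i \<le> rbar$i" using rb_eq by (simp add: mult.commute)
  qed
  have bla: "bounded_linear (\<lambda>v::real^'m. a *v v)" by (simp add: linear_linear)
  have snorm: "norm (a *v v) \<le> spec_norm a * norm v" for v
    unfolding spec_norm_def by (rule onorm[OF bla])
  have sn_pos: "spec_norm a > 0"
  proof -
    fix i
    obtain j where aij: "a$i$j \<noteq> 0" using no_zero_row by blast
    have "(a *v axis j 1)$i = a$i$j" by (simp add: matrix_vector_mult_def axis_def if_distrib cong: if_cong)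
    hence "\<not> (\<forall>x. a *v x = 0)" using aij by (metis zero_index)
    thus ?thesis unfolding spec_norm_def using onorm_pos_lt[OF bla] by blast
  qed
  have contF: "continuous_on P F"
  proof -
    have "continuous (at q) F" for q unfolding FF by (rule has_derivative_continuous[OF Fh_deriv[OF Bp rlp]])
    thus ?thesis by (simp add: continuous_at_imp_continuous_on)
  qed
  obtain xs where xsP: "xs \<in> P" and xsmin: "\<And>y. y \<in> P \<Longrightarrow> F xs \<le> F y"
    using continuous_attains_inf[OF _ neP contF] cP bP by (metis compact_eq_bounded_closed)
  have Fs: "Fstar = F xs" unfolding Fstar_def using xsP xsmin by (intro cInf_eq_minimum) auto
  define ts where "ts = a *v xs"
  define Xs where "Xs = P \<inter> {x. a *v x = ts}"
  have neX: "Xs \<noteq> {}" unfolding Xs_def ts_def using xsP by blast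
  have cX: "closed Xs" unfolding Xs_def P_eq by (intro closed_Int closed_simplex closed_lin)
  define Lf where "Lf = L * (spec_norm a)\<^sup>2"
  have Lf_pos: "Lf > 0" unfolding Lf_def using L_pos sn_pos by simp
  define H where "H = hoffman P a"
  define M where "M = max mu (L * H\<^sup>2 * (spec_norm a)\<^sup>2)"
  define rho where "rho = mu / M"
  have M_pos: "M > 0" unfolding M_def using mu_pos by simp
  have rho_pos: "rho > 0" unfolding rho_def using mu_pos M_pos by simp
  have rho_le: "rho \<le> 1" unfolding rho_def using M_pos by (simp add: M_def)
  have h4: "rho * (Lf * H\<^sup>2) \<le> mu"
  proof -
    have "Lf * H\<^sup>2 \<le> M" unfolding M_def Lf_def by (simp add: mult_ac)
    hence "mu * (Lf * H\<^sup>2) \<le> mu * M" using mu_pos by (intro mult_left_mono) auto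
    thus ?thesis unfolding rho_def using M_pos by (simp add: field_simps)
  qed
  have key: "F (closest_point P (x - (1 / Lf) *\<^sub>R grad F x)) - Fstar \<le> (1 - rho) * (F x - Fstar)"
    if xP: "x \<in> P" for x
  proof -
    define G where "G = Gh a B rlow x"
    define c where "c = 1 / Lf"
    define xp where "xp = closest_point P (x - c *\<^sub>R G)"
    have xpP: "xp \<in> P" unfolding xp_def by (rule closest_point_in_set[OF cP neP])
    define xb where "xb = closest_point Xs x"
    have xbX: "xb \<in> Xs" unfolding xb_def by (rule closest_point_in_set[OF cX neX])
    hence xbP: "xb \<in> P" and axb: "a *v xb = ts" unfolding Xs_def by auto
    have Fxb: "F xb = Fstar" unfolding Fs FF Fh_def using axb ts_def by simp
    have hof: "norm (x - xb) \<le> H * norm (a *v x - ts)"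
      unfolding xb_def H_def Xs_def by (rule hoffman_bound[OF P_eq xP]) (use neX Xs_def in simp)
    define y where "y = x + rho *\<^sub>R (xb - x)"
    have yP: "y \<in> P" unfolding y_def using simplex_seg[OF P_eq xP xbP] rho_pos rho_le by simp
    have "dist (x - c *\<^sub>R G) xp \<le> dist (x - c *\<^sub>R G) y" unfolding xp_def by (rule closest_point_le[OF cP yP])
    hence "norm ((xp - x) + c *\<^sub>R G) \<le> norm ((y - x) + c *\<^sub>R G)"
      by (simp add: dist_norm norm_minus_commute algebra_simps)
    hence "(norm ((xp - x) + c *\<^sub>R G))\<^sup>2 \<le> (norm ((y - x) + c *\<^sub>R G))\<^sup>2"
      by (intro power_mono) auto
    hence pr: "(norm (xp - x))\<^sup>2 + 2 * c * (G \<bullet> (xp - x)) \<le> (norm (y - x))\<^sup>2 + 2 * c * (G \<bullet> (y - x))"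
      unfolding norm_add_sq by simp
    have pr2: "G \<bullet> (xp - x) + Lf / 2 * (norm (xp - x))\<^sup>2 \<le> G \<bullet> (y - x) + Lf / 2 * (norm (y - x))\<^sup>2"
    proof -
      have "Lf / 2 * ((norm (xp - x))\<^sup>2 + 2 * c * (G \<bullet> (xp - x))) \<le> Lf / 2 * ((norm (y - x))\<^sup>2 + 2 * c * (G \<bullet> (y - x)))"
        using pr Lf_pos by (intro mult_left_mono) auto
      thus ?thesis unfolding c_def using Lf_pos by (simp add: algebra_simps)
    qed
    have up: "F xp \<le> F x + G \<bullet> (xp - x) + L / 2 * (norm (a *v (xp - x)))\<^sup>2"
      unfolding FF G_def by (rule Fh_upper[OF Bp rlp KL])
    have "(norm (a *v (xp - x)))\<^sup>2 \<le> (spec_norm a * norm (xp - x))\<^sup>2"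
      using snorm by (intro power_mono) auto
    hence "L / 2 * (norm (a *v (xp - x)))\<^sup>2 \<le> L / 2 * (spec_norm a * norm (xp - x))\<^sup>2"
      using L_pos by (intro mult_left_mono) auto
    also have "\<dots> = Lf / 2 * (norm (xp - x))\<^sup>2" unfolding Lf_def by (simp add: power_mult_distrib)
    finally have up2: "F xp \<le> F x + G \<bullet> (y - x) + Lf / 2 * (norm (y - x))\<^sup>2" using up pr2 by linarith
    have low: "F xb \<ge> F x + G \<bullet> (xb - x) + mu / 2 * (norm (a *v (xb - x)))\<^sup>2"
      unfolding FF G_def by (rule Fh_lower[OF Bp rlp rlrb aR[OF xP] aR[OF xbP] mu_le])
    have nax: "norm (a *v (xb - x)) = norm (a *v x - ts)"
      using axb by (simp add: matrix_vector_mult_diff_distrib norm_minus_commute)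
    have gy: "G \<bullet> (y - x) = rho * (G \<bullet> (xb - x))" unfolding y_def by simp
    have ny: "(norm (y - x))\<^sup>2 = rho\<^sup>2 * (norm (xb - x))\<^sup>2" unfolding y_def using rho_pos by (simp add: power_mult_distrib)
    have h3: "(norm (xb - x))\<^sup>2 \<le> H\<^sup>2 * (norm (a *v x - ts))\<^sup>2"
    proof -
      have "(norm (xb - x))\<^sup>2 \<le> (H * norm (a *v x - ts))\<^sup>2" using hof by (intro power_mono) (auto simp: norm_minus_commute)
      thus ?thesis by (simp add: power_mult_distrib)
    qed
    have h1: "F xp \<le> F x + rho * (G \<bullet> (xb - x)) + Lf / 2 * (rho\<^sup>2 * (norm (xb - x))\<^sup>2)"
      using up2 gy ny by simp
    have h2: "G \<bullet> (xb - x) \<le> Fstar - F x - mu / 2 * (norm (a *v x - ts))\<^sup>2"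
      using low Fxb nax by simp
    have "F xp - Fstar \<le> (1 - rho) * (F x - Fstar)"
      by (rule combine_ineq[OF h1 h2 h3 h4]) (use rho_pos Lf_pos in auto)
    thus ?thesis unfolding xp_def c_def G_def gradF .
  qed
  have pP: "p t \<in> P" for t
  proof (induction t)
    case 0 thus ?case using p0 .
  next
    case (Suc t) thus ?case using step closest_point_in_set[OF cP neP] by simp
  qed
  have rec: "F (p (Suc t)) - Fstar \<le> (1 - rho) * (F (p t) - Fstar)" for t
    using key[OF pP[of t]] step unfolding Lf_def by simp
  have main: "F (p t) - Fstar \<le> (1 - rho) ^ t * (F (p 0) - Fstar)" for t
  proof (induction t)
    case 0 thus ?case by simp
  next
    case (Suc t)
    have "F (p (Suc t)) - Fstar \<le> (1 - rho) * (F (p t) - Fstar)" by (rule rec)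
    also have "\<dots> \<le> (1 - rho) * ((1 - rho) ^ t * (F (p 0) - Fstar))"
      using Suc rho_le by (intro mult_left_mono) auto
    finally show ?case by simp
  qed
  thus ?thesis unfolding rho_def M_def H_def by blast
qed


end
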